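(* A conditional frame $(X,\leq,\mathcal{R})$ validates $\mathsf{iCC}=\mathsf{ICK}\oplus(p\mathrel{\Box\!\!\!\rightarrow} p)\oplus(((p\mathrel{\Box\!\!\!\rightarrow} q)\wedge((p\wedge q)\mathrel{\Box\!\!\!\rightarrow} r))\to(p\mathrel{\Box\!\!\!\rightarrow} r))\oplus(((p\mathrel{\Box\!\!\!\rightarrow} q)\wedge(p\mathrel{\Box\!\!\!\rightarrow} r))\to((p\wedge q)\mathrel{\Box\!\!\!\rightarrow} r))$ if and only if for all $x\in X$ and upsets $a,b$: (i) $R_a[x]\subseteq a$; and (ii) $R_a[x]\subseteq b\subseteq a$ implies ${\uparrow}R_a[x]={\uparrow}R_b[x]$.
   Context: Formulas: $\phi ::= p\mid\bot\mid\phi\wedge\phi\mid\phi\vee\phi\mid\phi\to\phi\mid\phi\mathrel{\Box\!\!\!\rightarrow}\phi$. $\mathsf{ICK}\oplus\Gamma$ is the smallest set containing intuitionistic propositional logic, $\Gamma$, $(p\mathrel{\Box\!\!\!\rightarrow}(q\wedge r))\leftrightarrow((p\mathrel{\Box\!\!\!\rightarrow} q)\wedge(p\mathrel{\Box\!\!\!\rightarrow} r))$ and $(p\mathrel{\Box\!\!\!\rightarrow}\top)\leftrightarrow\top$, closed under uniform substitution, modus ponens and congruence rules for both arguments of $\mathrel{\Box\!\!\!\rightarrow}$. A conditional frame is $(X,\leq,\mathcal{R})$, $(X,\leq)$ a nonempty preorder, $\mathcal{R}=\{R_a\mid a\text{ an upset}\}$ with $(\leq\circ R_a)\subseteq(R_a\circ\leq)$;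 valuations assign upsets to letters and $x\models\phi\mathrel{\Box\!\!\!\rightarrow}\psi$ iff every $y$ with $xR_{V(\phi)}y$ satisfies $\psi$. *)

theory Defs
  imports Main
begin

datatype form =
    Var nat
  | Bot
  | And form form
  | Or form form
  | Imp form form
  | Cond form form

definition Top :: form where "Top = Imp Bot Bot"
definition Iff :: "form \<Rightarrow> form \<Rightarrow> form" where
  "Iff a b = And (Imp a b) (Imp b a)"

primrec subst :: "(nat \<Rightarrow> form) \<Rightarrow> form \<Rightarrow> form" where
  "subst s (Var n) = s n"
| "subst s Bot = Bot"
| "subst s (And a b) = And (subst s a) (subst s b)"
| "subst s (Or a b) = Or (subst s a) (subst s b)"
| "subst s (Imp a b) = Imp (subst s a) (subst s b)"
| "subst s (Cond a b) = Cond (subst s a) (subst s b)"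

abbreviation "pP \<equiv> Var 0"
abbreviation "pQ \<equiv> Var 1"
abbreviation "pR \<equiv> Var 2"

inductive ipc_axiom :: "form \<Rightarrow> bool" where
  "ipc_axiom (Imp a (Imp b a))"
| "ipc_axiom (Imp (Imp a (Imp b c)) (Imp (Imp a b) (Imp a c)))"
| "ipc_axiom (Imp (And a b) a)"
| "ipc_axiom (Imp (And a b) b)"
| "ipc_axiom (Imp a (Imp b (And a b)))"
| "ipc_axiom (Imp a (Or a b))"
| "ipc_axiom (Imp b (Or a b))"
| "ipc_axiom (Imp (Imp a c) (Imp (Imp b c) (Imp (Or a b) c)))"
| "ipc_axiom (Imp Bot a)"

inductive_set ICK :: "form set \<Rightarrow> form set" for G :: "form set" where
  ipc: "ipc_axiom a \<Longrightarrow> a \<in> ICK G"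
| extra: "a \<in> G \<Longrightarrow> a \<in> ICK G"
| conj_ax: "Iff (Cond pP (And pQ pR)) (And (Cond pP pQ) (Cond pP pR)) \<in> ICK G"
| top_ax: "Iff (Cond pP Top) Top \<in> ICK G"
| us: "a \<in> ICK G \<Longrightarrow> subst s a \<in> ICK G"
| mp: "Imp a b \<in> ICK G \<Longrightarrow> a \<in> ICK G \<Longrightarrow> b \<in> ICK G"
| cong_l: "Iff a b \<in> ICK G \<Longrightarrow> Iff (Cond a c) (Cond b c) \<in> ICK G"
| cong_r: "Iff a b \<in> ICK G \<Longrightarrow> Iff (Cond c a) (Cond c b) \<in> ICK G"

definition iCC_axioms :: "form set" where
  "iCC_axioms = {
     Cond pP pP,
     Imp (And (Cond pP pQ) (Cond (And pP pQ) pR)) (Cond pP pR),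
     Imp (And (Cond pP pQ) (Cond pP pR)) (Cond (And pP pQ) pR)}"

definition iCC :: "form set" where "iCC = ICK iCC_axioms"

definition upset :: "'w set \<Rightarrow> ('w \<Rightarrow> 'w \<Rightarrow> bool) \<Rightarrow> 'w set \<Rightarrow> bool" where
  "upset X le a \<longleftrightarrow> a \<subseteq> X \<and> (\<forall>x\<in>a. \<forall>y\<in>X. le x y \<longrightarrow> y \<in> a)"

definition up :: "'w set \<Rightarrow> ('w \<Rightarrow> 'w \<Rightarrow> bool) \<Rightarrow> 'w set \<Rightarrow> 'w set" where
  "up X le S = {y \<in> X. \<exists>s\<in>S. le s y}"

definition cond_frame ::
  "'w set \<Rightarrow> ('w \<Rightarrow> 'w \<Rightarrow> bool) \<Rightarrow> ('w set \<Rightarrow> ('w \<times> 'w) set) \<Rightarrow> bool" where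
  "cond_frame X le R \<longleftrightarrow>
     X \<noteq> {} \<and>
     (\<forall>x\<in>X. le x x) \<and>
     (\<forall>x\<in>X. \<forall>y\<in>X. \<forall>z\<in>X. le x y \<longrightarrow> le y z \<longrightarrow> le x z) \<and>
     (\<forall>a. upset X le a \<longrightarrow>
        R a \<subseteq> X \<times> X \<and>
        (\<forall>x y z. x \<in> X \<longrightarrow> le x y \<longrightarrow> (y, z) \<in> R a \<longrightarrow>
           (\<exists>w. (x, w) \<in> R a \<and> le w z)))"

primrec sat ::
  "'w set \<Rightarrow> ('w \<Rightarrow> 'w \<Rightarrow> bool) \<Rightarrow> ('w set \<Rightarrow> ('w \<times> 'w) set) \<Rightarrow> (nat \<Rightarrow> 'w set)
     \<Rightarrow> form \<Rightarrow> 'w \<Rightarrow> bool" where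
  "sat X le R V (Var n) x = (x \<in> V n)"
| "sat X le R V Bot x = False"
| "sat X le R V (And a b) x = (sat X le R V a x \<and> sat X le R V b x)"
| "sat X le R V (Or a b) x = (sat X le R V a x \<or> sat X le R V b x)"
| "sat X le R V (Imp a b) x =
     (\<forall>y\<in>X. le x y \<longrightarrow> sat X le R V a y \<longrightarrow> sat X le R V b y)"
| "sat X le R V (Cond a b) x =
     (\<forall>y. (x, y) \<in> R {z \<in> X. sat X le R V a z} \<longrightarrow> sat X le R V b y)"

definition frame_valid ::
  "'w set \<Rightarrow> ('w \<Rightarrow> 'w \<Rightarrow> bool) \<Rightarrow> ('w set \<Rightarrow> ('w \<times> 'w) set) \<Rightarrow> form \<Rightarrow> bool" where
  "frame_valid X le R f \<longleftrightarrow>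
     (\<forall>V. (\<forall>n. upset X le (V n)) \<longrightarrow> (\<forall>x\<in>X. sat X le R V f x))"

definition validates ::
  "'w set \<Rightarrow> ('w \<Rightarrow> 'w \<Rightarrow> bool) \<Rightarrow> ('w set \<Rightarrow> ('w \<times> 'w) set) \<Rightarrow> form set \<Rightarrow> bool" where
  "validates X le R L \<longleftrightarrow> (\<forall>f\<in>L. frame_valid X le R f)"

end

theory Submission
  imports Defs
begin
lemma cf_refl: "cond_frame X le R \<Longrightarrow> x \<in> X \<Longrightarrow> le x x"
  unfolding cond_frame_def by (elim conjE) blast
lemma cf_trans: "cond_frame X le R \<Longrightarrow> x \<in> X \<Longrightarrow> y \<in> X \<Longrightarrow> z \<in> X \<Longrightarrow> le x y \<Longrightarrow> le y z \<Longrightarrow> le x z"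
  unfolding cond_frame_def by blast
lemma cf_RX: "cond_frame X le R \<Longrightarrow> upset X le a \<Longrightarrow> (x, y) \<in> R a \<Longrightarrow> x \<in> X \<and> y \<in> X"
  unfolding cond_frame_def by blast
lemma cf_mono: "cond_frame X le R \<Longrightarrow> upset X le a \<Longrightarrow> x \<in> X \<Longrightarrow> le x y \<Longrightarrow> (y, z) \<in> R a
  \<Longrightarrow> \<exists>w. (x, w) \<in> R a \<and> le w z"
  unfolding cond_frame_def by blast

lemma persist:
  assumes cf: "cond_frame X le R" and V: "\<forall>n. upset X le (V n)"
  shows "x \<in> X \<Longrightarrow> y \<in> X \<Longrightarrow> le x y \<Longrightarrow> sat X le R V f x \<Longrightarrow> sat X le R V f y"
proof (induction f arbitrary: x y)
  case (Var n)
  have "V n \<subseteq> X \<and> (\<forall>x\<in>V n. \<forall>y\<in>X. le x y \<longrightarrow> y \<in> V n)" using V unfolding upset_def by blast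
  then show ?case using Var.prems by simp
next
  case (Imp a b)
  show ?case unfolding sat.simps
  proof (intro ballI impI)
    fix z assume "z \<in> X" "le y z" "sat X le R V a z"
    then show "sat X le R V b z" using Imp.prems cf_trans[OF cf, of x y z] by simp
  qed
next
  case (Cond a b)
  let ?A = "{z \<in> X. sat X le R V a z}"
  have up: "upset X le ?A" unfolding upset_def using Cond.IH(1) by blast
  show ?case
  proof (simp only: sat.simps, intro allI impI)
    fix z assume z: "(y, z) \<in> R ?A"
    obtain w where w: "(x, w) \<in> R ?A" "le w z" using cf_mono[OF cf up Cond.prems(1,3) z] by blast
    have "sat X le R V b w" using Cond.prems(4) w(1) by simp
    then show "sat X le R V b z" using Cond.IH(2)[of w z] cf_RX[OF cf up w(1)] cf_RX[OF cf up z] w(2) by blast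
  qed
next
  case (And a b) then show ?case by (simp; blast)
next
  case (Or a b) then show ?case by (simp; blast)
qed simp

lemma ts_upset:
  assumes cf: "cond_frame X le R" and V: "\<forall>n. upset X le (V n)"
  shows "upset X le {z \<in> X. sat X le R V f z}"
proof -
  have "\<And>x y. x \<in> X \<Longrightarrow> y \<in> X \<Longrightarrow> le x y \<Longrightarrow> sat X le R V f x \<Longrightarrow> sat X le R V f y"
    using persist[OF cf V] by blast
  then show ?thesis unfolding upset_def by blast
qed

lemma sat_subst:
  assumes cf: "cond_frame X le R" and V: "\<forall>n. upset X le (V n)"
  shows "x \<in> X \<Longrightarrow> sat X le R V (subst s f) x = sat X le R (\<lambda>n. {z \<in> X. sat X le R V (s n) z}) f x"
proof (induction f arbitrary: x)
  case (Cond a b)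
  let ?V' = "\<lambda>n. {z \<in> X. sat X le R V (s n) z}"
  have V': "\<forall>n. upset X le (?V' n)" using ts_upset[OF cf V] by blast
  have eq: "{z \<in> X. sat X le R V (subst s a) z} = {z \<in> X. sat X le R ?V' a z}"
    using Cond.IH(1) by blast
  have up: "upset X le {z \<in> X. sat X le R ?V' a z}" using ts_upset[OF cf V'] .
  have "sat X le R V (subst s (Cond a b)) x = (\<forall>y. (x, y) \<in> R {z \<in> X. sat X le R ?V' a z} \<longrightarrow> sat X le R V (subst s b) y)"
    using eq by simp
  also have "\<dots> = (\<forall>y. (x, y) \<in> R {z \<in> X. sat X le R ?V' a z} \<longrightarrow> sat X le R ?V' b y)"
  proof -
    have yX: "\<And>y. (x, y) \<in> R {z \<in> X. sat X le R ?V' a z} \<Longrightarrow> y \<in> X" using cf_RX[OF cf up] by blast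
    show ?thesis
    proof (intro iffI allI impI)
      fix y assume "\<forall>y. (x, y) \<in> R {z \<in> X. sat X le R ?V' a z} \<longrightarrow> sat X le R V (subst s b) y"
        and y: "(x, y) \<in> R {z \<in> X. sat X le R ?V' a z}"
      then show "sat X le R ?V' b y" using Cond.IH(2)[OF yX[OF y]] by simp
    next
      fix y assume "\<forall>y. (x, y) \<in> R {z \<in> X. sat X le R ?V' a z} \<longrightarrow> sat X le R ?V' b y"
        and y: "(x, y) \<in> R {z \<in> X. sat X le R ?V' a z}"
      then show "sat X le R V (subst s b) y" using Cond.IH(2)[OF yX[OF y]] by simp
    qed
  qed
  finally show ?case by simp
next
  case (Var n) then show ?case by simp
next
  case (Imp a b) then show ?case by simp
next
  case (And a b) then show ?case by simp
next
  case (Or a b) then show ?case by simp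
qed simp

lemma valid_subst:
  assumes cf: "cond_frame X le R" and v: "frame_valid X le R f"
  shows "frame_valid X le R (subst s f)"
  unfolding frame_valid_def
proof (intro allI impI ballI)
  fix V :: "nat \<Rightarrow> _ set" and x assume V: "\<forall>n. upset X le (V n)" and x: "x \<in> X"
  have up: "\<forall>n. upset X le {z \<in> X. sat X le R V (s n) z}" using ts_upset[OF cf V] by blast
  have h: "\<And>W. \<forall>n. upset X le (W n) \<Longrightarrow> sat X le R W f x" using v x unfolding frame_valid_def by blast
  show "sat X le R V (subst s f) x" using h[OF up] sat_subst[OF cf V x] by simp
qed

lemma valid_iff:
  assumes cf: "cond_frame X le R" and v: "frame_valid X le R (Iff a b)" and V: "\<forall>n. upset X le (V n)"
  shows "{z \<in> X. sat X le R V a z} = {z \<in> X. sat X le R V b z}"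
proof -
  have "\<And>z. z \<in> X \<Longrightarrow> sat X le R V a z = sat X le R V b z"
  proof -
    fix z assume z: "z \<in> X"
    have "sat X le R V (Iff a b) z" using v unfolding frame_valid_def using V z by blast
    then have "(le z z \<longrightarrow> sat X le R V a z \<longrightarrow> sat X le R V b z) \<and> (le z z \<longrightarrow> sat X le R V b z \<longrightarrow> sat X le R V a z)"
      using z unfolding Iff_def sat.simps by blast
    then show "sat X le R V a z = sat X le R V b z" using cf_refl[OF cf z] by blast
  qed
  then show ?thesis by blast
qed

lemma ipc_sat:
  assumes cf: "cond_frame X le R" and V: "\<forall>n. upset X le (V n)"
  shows "ipc_axiom f \<Longrightarrow> x \<in> X \<Longrightarrow> sat X le R V f x"
proof (induction f arbitrary: x rule: ipc_axiom.induct)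
  case (1 a b)
  then show ?case unfolding sat.simps by (meson persist[OF cf V] cf_trans[OF cf])
next
  case (2 a b c)
  then show ?case unfolding sat.simps by (meson persist[OF cf V] cf_trans[OF cf] cf_refl[OF cf])
next
  case (3 a b)
  then show ?case unfolding sat.simps by (meson persist[OF cf V])
next
  case (4 a b)
  then show ?case unfolding sat.simps by (meson persist[OF cf V])
next
  case (5 a b)
  then show ?case unfolding sat.simps by (meson persist[OF cf V] cf_trans[OF cf])
next
  case (6 a b)
  then show ?case unfolding sat.simps by (meson persist[OF cf V])
next
  case (7 a b)
  then show ?case unfolding sat.simps by (meson persist[OF cf V])
next
  case (8 a c b)
  then show ?case unfolding sat.simps by (meson persist[OF cf V] cf_trans[OF cf] cf_refl[OF cf])
next
  case (9 a)
  then show ?case by simp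
qed

lemma ICK_valid:
  assumes cf: "cond_frame X le R" and G: "\<forall>g\<in>G. frame_valid X le R g"
  shows "f \<in> ICK G \<Longrightarrow> frame_valid X le R f"
proof (induction f rule: ICK.induct)
  case (ipc a)
  show ?case unfolding frame_valid_def using ipc_sat[OF cf _ ipc] by blast
next
  case (extra a)
  then show ?case using G by blast
next
  case conj_ax
  show ?case unfolding frame_valid_def Iff_def sat.simps by blast
next
  case top_ax
  show ?case unfolding frame_valid_def Iff_def Top_def sat.simps by blast
next
  case (us a s)
  then show ?case using valid_subst[OF cf] by blast
next
  case (mp a b)
  show ?case unfolding frame_valid_def
  proof (intro allI impI ballI)
    fix V :: "nat \<Rightarrow> _ set" and x assume V: "\<forall>n. upset X le (V n)" and x: "x \<in> X"
    have 1: "sat X le R V (Imp a b) x" using mp.IH(1) unfolding frame_valid_def using V x by blast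
    have 2: "sat X le R V a x" using mp.IH(2) unfolding frame_valid_def using V x by blast
    show "sat X le R V b x" using 1 2 x cf_refl[OF cf x] by simp
  qed
next
  case (cong_l a b c)
  show ?case unfolding frame_valid_def
  proof (intro allI impI ballI)
    fix V :: "nat \<Rightarrow> _ set" and x assume V: "\<forall>n. upset X le (V n)" and x: "x \<in> X"
    have eq: "{z \<in> X. sat X le R V a z} = {z \<in> X. sat X le R V b z}" using valid_iff[OF cf cong_l.IH V] .
    show "sat X le R V (Iff (Cond a c) (Cond b c)) x"
      unfolding Iff_def sat.simps eq by blast
  qed
next
  case (cong_r a b c)
  show ?case unfolding frame_valid_def
  proof (intro allI impI ballI)
    fix V :: "nat \<Rightarrow> _ set" and x assume V: "\<forall>n. upset X le (V n)" and x: "x \<in> X"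
    have eq: "\<And>z. z \<in> X \<Longrightarrow> sat X le R V a z = sat X le R V b z" using valid_iff[OF cf cong_r.IH V] by blast
    have up: "upset X le {z \<in> X. sat X le R V c z}" using ts_upset[OF cf V] .
    have eq2: "\<And>y. sat X le R V (Cond c a) y = sat X le R V (Cond c b) y"
    proof -
      fix y
      have "\<And>w. (y, w) \<in> R {z \<in> X. sat X le R V c z} \<Longrightarrow> sat X le R V a w = sat X le R V b w"
        using cf_RX[OF cf up] eq by blast
      then show "sat X le R V (Cond c a) y = sat X le R V (Cond c b) y" by simp
    qed
    show "sat X le R V (Iff (Cond c a) (Cond c b)) x"
      unfolding Iff_def sat.simps(3,5) eq2 by blast
  qed
qed

lemma up_upset: "cond_frame X le R \<Longrightarrow> S \<subseteq> X \<Longrightarrow> upset X le (up X le S)"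
  unfolding upset_def up_def using cf_trans[of X le R] by blast
lemma sub_up: "cond_frame X le R \<Longrightarrow> S \<subseteq> X \<Longrightarrow> S \<subseteq> up X le S"
  unfolding up_def using cf_refl[of X le R] by blast
lemma up_least: "S \<subseteq> X \<Longrightarrow> upset X le U \<Longrightarrow> S \<subseteq> U \<Longrightarrow> up X le S \<subseteq> U"
  unfolding up_def upset_def by blast
lemma up_mono: "S \<subseteq> T \<Longrightarrow> up X le S \<subseteq> up X le T"
  unfolding up_def by blast
lemma Rimg: "cond_frame X le R \<Longrightarrow> upset X le a \<Longrightarrow> R a `` {x} \<subseteq> X"
  using cf_RX[of X le R a] by blast
lemma upset_int: "upset X le a \<Longrightarrow> upset X le c \<Longrightarrow> upset X le (a \<inter> c)"
  unfolding upset_def by blast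

definition condH where
  "condH X le R \<longleftrightarrow> (\<forall>x\<in>X. \<forall>a b. upset X le a \<longrightarrow> upset X le b \<longrightarrow>
        R a `` {x} \<subseteq> a \<and>
        (R a `` {x} \<subseteq> b \<and> b \<subseteq> a \<longrightarrow> up X le (R a `` {x}) = up X le (R b `` {x})))"

lemma cut_sem:
  assumes cf: "cond_frame X le R" and a: "upset X le a" and c: "upset X le c" and r: "upset X le r"
    and y: "y \<in> X" and H: "condH X le R" and 1: "R a `` {y} \<subseteq> c" and 2: "R (a \<inter> c) `` {y} \<subseteq> r"
  shows "R a `` {y} \<subseteq> r"
proof -
  have b: "upset X le (a \<inter> c)" using upset_int[OF a c] .
  have "R a `` {y} \<subseteq> a" using H y a b unfolding condH_def by blast
  then have "R a `` {y} \<subseteq> a \<inter> c" using 1 by blast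
  then have eq: "up X le (R a `` {y}) = up X le (R (a \<inter> c) `` {y})" using H y a b unfolding condH_def by blast
  have "R a `` {y} \<subseteq> up X le (R a `` {y})" using sub_up[OF cf Rimg[OF cf a]] .
  also have "\<dots> \<subseteq> r" unfolding eq using up_least[OF Rimg[OF cf b] r 2] .
  finally show ?thesis .
qed

lemma cm_sem:
  assumes cf: "cond_frame X le R" and a: "upset X le a" and c: "upset X le c" and r: "upset X le r"
    and y: "y \<in> X" and H: "condH X le R" and 1: "R a `` {y} \<subseteq> c" and 2: "R a `` {y} \<subseteq> r"
  shows "R (a \<inter> c) `` {y} \<subseteq> r"
proof -
  have b: "upset X le (a \<inter> c)" using upset_int[OF a c] .
  have "R a `` {y} \<subseteq> a" using H y a b unfolding condH_def by blast
  then have "R a `` {y} \<subseteq> a \<inter> c" using 1 by blast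
  then have eq: "up X le (R a `` {y}) = up X le (R (a \<inter> c) `` {y})" using H y a b unfolding condH_def by blast
  have "R (a \<inter> c) `` {y} \<subseteq> up X le (R (a \<inter> c) `` {y})" using sub_up[OF cf Rimg[OF cf b]] .
  also have "\<dots> \<subseteq> r" unfolding eq[symmetric] using up_least[OF Rimg[OF cf a] r 2] .
  finally show ?thesis .
qed

lemma ts_var: "\<forall>n. upset X le (V n) \<Longrightarrow> {z \<in> X. sat X le R V (Var n) z} = V n"
  unfolding upset_def by auto
lemma ts_and: "\<forall>n. upset X le (V n) \<Longrightarrow> {z \<in> X. sat X le R V (And (Var m) (Var n)) z} = V m \<inter> V n"
  unfolding upset_def by auto
lemma sat_cond1: "\<forall>n. upset X le (V n) \<Longrightarrow> sat X le R V (Cond (Var m) (Var n)) x = (R (V m) `` {x} \<subseteq> V n)"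
proof -
  assume V: "\<forall>n. upset X le (V n)"
  have eq: "{z \<in> X. z \<in> V m} = V m" using ts_var[OF V] by simp
  show ?thesis by (simp add: eq; blast)
qed
lemma sat_cond2: "\<forall>n. upset X le (V n) \<Longrightarrow> sat X le R V (Cond (And (Var m) (Var k)) (Var n)) x = (R (V m \<inter> V k) `` {x} \<subseteq> V n)"
proof -
  assume V: "\<forall>n. upset X le (V n)"
  have eq: "{z \<in> X. z \<in> V m \<and> z \<in> V k} = V m \<inter> V k" using ts_and[OF V] by simp
  show ?thesis by (simp add: eq; blast)
qed

lemma axioms_valid:
  assumes cf: "cond_frame X le R" and H: "condH X le R"
  shows "\<forall>g\<in>iCC_axioms. frame_valid X le R g"
  unfolding iCC_axioms_def frame_valid_def
proof (intro ballI allI impI)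
  fix g and V :: "nat \<Rightarrow> _ set" and x
  assume g: "g \<in> {Cond pP pP, Imp (And (Cond pP pQ) (Cond (And pP pQ) pR)) (Cond pP pR),
     Imp (And (Cond pP pQ) (Cond pP pR)) (Cond (And pP pQ) pR)}"
    and V: "\<forall>n. upset X le (V n)" and x: "x \<in> X"
  have Vn: "\<And>n. upset X le (V n)" using V by blast
  have A1: "sat X le R V (Cond pP pP) x"
    unfolding sat_cond1[OF V] using H x Vn unfolding condH_def by blast
  have A2: "sat X le R V (Imp (And (Cond pP pQ) (Cond (And pP pQ) pR)) (Cond pP pR)) x"
    unfolding sat.simps(5,3) sat_cond1[OF V] sat_cond2[OF V]
    using cut_sem[OF cf Vn Vn Vn _ H] by blast
  have A3: "sat X le R V (Imp (And (Cond pP pQ) (Cond pP pR)) (Cond (And pP pQ) pR)) x"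
    unfolding sat.simps(5,3) sat_cond1[OF V] sat_cond2[OF V]
    using cm_sem[OF cf Vn Vn Vn _ H] by blast
  show "sat X le R V g x" using g A1 A2 A3 by blast
qed

lemma ax_in: "g \<in> iCC_axioms \<Longrightarrow> g \<in> iCC"
  unfolding iCC_def by (rule ICK.extra)

lemma valid_sat: "frame_valid X le R f \<Longrightarrow> \<forall>n. upset X le (V n) \<Longrightarrow> x \<in> X \<Longrightarrow> sat X le R V f x"
  unfolding frame_valid_def by blast

theorem lemma6p1:
  assumes "cond_frame X le R"
  shows "validates X le R iCC \<longleftrightarrow>
    (\<forall>x\<in>X. \<forall>a b. upset X le a \<longrightarrow> upset X le b \<longrightarrow>
        R a `` {x} \<subseteq> a \<and>
        (R a `` {x} \<subseteq> b \<and> b \<subseteq> a \<longrightarrow> up X le (R a `` {x}) = up X le (R b `` {x})))"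
  (is "_ \<longleftrightarrow> ?H")
proof
  assume H: ?H
  then have "condH X le R" unfolding condH_def .
  then have "\<forall>g\<in>iCC_axioms. frame_valid X le R g" using axioms_valid[OF assms] by blast
  then show "validates X le R iCC" unfolding validates_def iCC_def using ICK_valid[OF assms] by blast
next
  assume v: "validates X le R iCC"
  have v1: "frame_valid X le R (Cond pP pP)"
    using v ax_in unfolding validates_def iCC_axioms_def by blast
  have v2: "frame_valid X le R (Imp (And (Cond pP pQ) (Cond (And pP pQ) pR)) (Cond pP pR))"
    using v ax_in unfolding validates_def iCC_axioms_def by blast
  have v3: "frame_valid X le R (Imp (And (Cond pP pQ) (Cond pP pR)) (Cond (And pP pQ) pR))"
    using v ax_in unfolding validates_def iCC_axioms_def by blast
  show ?H
  proof (intro ballI allI impI conjI)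
    fix x a b assume x: "x \<in> X" and a: "upset X le a" and b: "upset X le b"
    define V1 :: "nat \<Rightarrow> _ set" where "V1 = (\<lambda>n. a)"
    have V1u: "\<forall>n. upset X le (V1 n)" unfolding V1_def using a by blast
    show "R a `` {x} \<subseteq> a"
    proof -
      have "R (V1 0) `` {x} \<subseteq> V1 0" using valid_sat[OF v1 V1u x] unfolding sat_cond1[OF V1u] .
      then show ?thesis by (simp add: V1_def)
    qed
    assume sub: "R a `` {x} \<subseteq> b \<and> b \<subseteq> a"
    have ab: "a \<inter> b = b" using sub by blast
    have xx: "le x x" using cf_refl[OF assms x] .
    have RaX: "R a `` {x} \<subseteq> X" using Rimg[OF assms a] .
    have RbX: "R b `` {x} \<subseteq> X" using Rimg[OF assms b] .
    define U where "U = up X le (R b `` {x})"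
    have Uu: "upset X le U" unfolding U_def using up_upset[OF assms RbX] .
    define V2 :: "nat \<Rightarrow> _ set" where "V2 = (\<lambda>n. if n = 0 then a else if n = 1 then b else U)"
    have V2u: "\<forall>n. upset X le (V2 n)" unfolding V2_def using a b Uu by simp
    have s2: "sat X le R V2 (Imp (And (Cond pP pQ) (Cond (And pP pQ) pR)) (Cond pP pR)) x"
      using valid_sat[OF v2 V2u x] .
    have "R a `` {x} \<subseteq> U"
      using s2 x xx sub sub_up[OF assms RbX]
      unfolding sat.simps(5,3) sat_cond1[OF V2u] sat_cond2[OF V2u] by (simp add: V2_def ab U_def)
    then have le1: "up X le (R a `` {x}) \<subseteq> up X le (R b `` {x})"
      using up_least[OF RaX Uu] unfolding U_def by blast
    define U' where "U' = up X le (R a `` {x})"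
    have U'u: "upset X le U'" unfolding U'_def using up_upset[OF assms RaX] .
    define V3 :: "nat \<Rightarrow> _ set" where "V3 = (\<lambda>n. if n = 0 then a else if n = 1 then b else U')"
    have V3u: "\<forall>n. upset X le (V3 n)" unfolding V3_def using a b U'u by simp
    have s3: "sat X le R V3 (Imp (And (Cond pP pQ) (Cond pP pR)) (Cond (And pP pQ) pR)) x"
      using valid_sat[OF v3 V3u x] .
    have "R b `` {x} \<subseteq> U'"
      using s3 x xx sub sub_up[OF assms RaX]
      unfolding sat.simps(5,3) sat_cond1[OF V3u] sat_cond2[OF V3u] by (simp add: V3_def ab U'_def)
    then have le2: "up X le (R b `` {x}) \<subseteq> up X le (R a `` {x})"
      using up_least[OF RbX U'u] unfolding U'_def by blast
    show "up X le (R a `` {x}) = up X le (R b `` {x})" using le1 le2 by blast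
  qed
qed
end
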